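(* Let $m\ge2$ be an integer and $j\in\{1,\dots,m-1\}$. The ideal $\langle X^m,X^{m-j}Y^j,Y^m\rangle$ of $R$ is an atom of $\mathcal I(R)$ if and only if $m\neq 2j$.
   Context: Let $D$ be an integral domain, $N\ge2$, $R=D[X_1,\dots,X_N]$, $X=X_1$, $Y=X_2$. $\mathcal I(R)$ denotes the monoid of nonzero ideals of $R$ under ideal multiplication (identity $R$, whose only unit is $R$). Standing assumption: $\mathcal I(R)$ is a BF-monoid. An atom of $\mathcal I(R)$ is an ideal $I\in\mathcal I(R)$, $I\ne R$, such that $I=\mathfrak a\mathfrak b$ with $\mathfrak a,\mathfrak b\in\mathcal I(R)$ forces $\mathfrak a=R$ or $\mathfrak b=R$. *)

theory Defs
  imports "HOL-Library.Poly_Mapping" "HOL-Library.Cardinality"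
begin

(* Polynomial ring in the variables indexed by a finite type 'n over 'a, as
   finitely supported maps from monomials to coefficients, with convolution product. *)

type_synonym ('n, 'a) mpoly_ring = "('n \<Rightarrow>\<^sub>0 nat) \<Rightarrow>\<^sub>0 'a"

definition var :: "'n \<Rightarrow> ('n, 'a::comm_ring_1) mpoly_ring" where
  "var i = Poly_Mapping.single (Poly_Mapping.single i 1) 1"

definition is_ideal :: "'r::comm_ring_1 set \<Rightarrow> bool" where
  "is_ideal I \<longleftrightarrow> 0 \<in> I \<and> (\<forall>a\<in>I. \<forall>b\<in>I. a + b \<in> I) \<and> (\<forall>r. \<forall>a\<in>I. r * a \<in> I)"

definition ideal_gen :: "'r::comm_ring_1 set \<Rightarrow> 'r set" where
  "ideal_gen S = \<Inter>{I. is_ideal I \<and> S \<subseteq> I}"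

definition ideal_mult :: "'r::comm_ring_1 set \<Rightarrow> 'r set \<Rightarrow> 'r set" where
  "ideal_mult I J = ideal_gen {a * b | a b. a \<in> I \<and> b \<in> J}"

text \<open>Elements of the monoid I(R) of nonzero ideals.\<close>
definition nz_ideal :: "'r::comm_ring_1 set \<Rightarrow> bool" where
  "nz_ideal I \<longleftrightarrow> is_ideal I \<and> I \<noteq> {0}"

definition ideal_atom :: "'r::comm_ring_1 set \<Rightarrow> bool" where
  "ideal_atom I \<longleftrightarrow> nz_ideal I \<and> I \<noteq> UNIV \<and>
     (\<forall>A B. nz_ideal A \<longrightarrow> nz_ideal B \<longrightarrow> I = ideal_mult A B \<longrightarrow> A = UNIV \<or> B = UNIV)"

fun ideal_prod :: "'r::comm_ring_1 set list \<Rightarrow> 'r set" where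
  "ideal_prod [] = UNIV"
| "ideal_prod (A # As) = ideal_mult A (ideal_prod As)"

definition ideal_lengths :: "'r::comm_ring_1 set \<Rightarrow> nat set" where
  "ideal_lengths I = {length As | As. (\<forall>A\<in>set As. ideal_atom A) \<and> ideal_prod As = I}"

definition ideal_monoid_BF :: "'r::comm_ring_1 itself \<Rightarrow> bool" where
  "ideal_monoid_BF _ \<longleftrightarrow> (\<forall>I::'r set. nz_ideal I \<and> I \<noteq> UNIV \<longrightarrow>
      ideal_lengths I \<noteq> {} \<and> finite (ideal_lengths I))"

end

theory Submission
  imports Defs "HOL-Library.Countable" "HOL-Computational_Algebra.Polynomial"
begin


abbreviation lk where "lk \<equiv> Poly_Mapping.lookup"
abbreviation ks where "ks \<equiv> Poly_Mapping.keys"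

lemma ideal_gen_is_ideal: "is_ideal (ideal_gen S)"
  unfolding ideal_gen_def is_ideal_def by blast

lemma ideal_gen_sub: "S \<subseteq> ideal_gen S"
  unfolding ideal_gen_def by blast

lemma ideal_gen_least: "is_ideal I \<Longrightarrow> S \<subseteq> I \<Longrightarrow> ideal_gen S \<subseteq> I"
  unfolding ideal_gen_def by blast

lemma ideal_gen_mono: "S \<subseteq> T \<Longrightarrow> ideal_gen S \<subseteq> ideal_gen T"
  unfolding ideal_gen_def by blast

lemma ideal_0: "is_ideal I \<Longrightarrow> 0 \<in> I"
  unfolding is_ideal_def by blast
lemma ideal_add: "is_ideal I \<Longrightarrow> a \<in> I \<Longrightarrow> b \<in> I \<Longrightarrow> a + b \<in> I"
  unfolding is_ideal_def by blast
lemma ideal_mul: "is_ideal I \<Longrightarrow> a \<in> I \<Longrightarrow> r * a \<in> I"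
  unfolding is_ideal_def by blast
lemma ideal_mul2: "is_ideal I \<Longrightarrow> a \<in> I \<Longrightarrow> a * r \<in> I"
  using ideal_mul[of I a r] by (simp add: mult.commute)
lemma ideal_neg: "is_ideal I \<Longrightarrow> a \<in> I \<Longrightarrow> - a \<in> I"
  using ideal_mul[of I a "-1"] by simp
lemma ideal_diff: "is_ideal I \<Longrightarrow> a \<in> I \<Longrightarrow> b \<in> I \<Longrightarrow> a - b \<in> I"
  using ideal_add[of I a "-b"] ideal_neg[of I b] by simp
lemma ideal_one_UNIV: "is_ideal I \<Longrightarrow> 1 \<in> I \<Longrightarrow> I = UNIV"
proof -
  assume a: "is_ideal I" "1 \<in> I"
  have "x \<in> I" for x using ideal_mul[OF a, of x] by simp
  then show ?thesis by blast
qed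

lemma ideal_mult_is_ideal: "is_ideal (ideal_mult A B)"
  unfolding ideal_mult_def by (rule ideal_gen_is_ideal)

lemma ideal_mult_prod: "a \<in> A \<Longrightarrow> b \<in> B \<Longrightarrow> a * b \<in> ideal_mult A B"
proof -
  assume "a \<in> A" "b \<in> B"
  then have "a * b \<in> {a * b | a b. a \<in> A \<and> b \<in> B}" by blast
  then show ?thesis unfolding ideal_mult_def using ideal_gen_sub by (rule subsetD[rotated])
qed

lemma ideal_mult_sub_left: "is_ideal A \<Longrightarrow> ideal_mult A B \<subseteq> A"
  unfolding ideal_mult_def by (rule ideal_gen_least) (use ideal_mul2 in blast)+

lemma ideal_mult_comm: "ideal_mult A B = ideal_mult B A"
proof -
  have "{a * b | a b. a \<in> A \<and> b \<in> B} = {a * b | a b. a \<in> B \<and> b \<in> A}"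
    by (metis (no_types, opaque_lifting) mult.commute)
  then show ?thesis unfolding ideal_mult_def by simp
qed

lemma ideal_mult_induct:
  assumes "h \<in> ideal_mult A B" "is_ideal T" "\<And>a b. a \<in> A \<Longrightarrow> b \<in> B \<Longrightarrow> a * b \<in> T"
  shows "h \<in> T"
proof -
  have "{a * b | a b. a \<in> A \<and> b \<in> B} \<subseteq> T" using assms(3) by blast
  then show ?thesis using assms(1,2) ideal_gen_least unfolding ideal_mult_def by blast
qed



definition mle :: "('n \<Rightarrow>\<^sub>0 nat) \<Rightarrow> ('n \<Rightarrow>\<^sub>0 nat) \<Rightarrow> bool" where
  "mle \<mu> \<nu> \<longleftrightarrow> (\<forall>i. lk \<mu> i \<le> lk \<nu> i)"

lemma mle_add_diff: "mle l k \<Longrightarrow> l + (k - l) = k"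
  by (rule poly_mapping_eqI) (simp add: mle_def lookup_add lookup_minus)

lemma mle_add: "mle l (l + q)"
  by (simp add: mle_def lookup_add)

lemma mle_add_right: "mle e q \<Longrightarrow> mle e (l + q)"
  by (simp add: mle_def lookup_add add_increasing)

lemma sum_when_eq:
  fixes g :: "('n \<Rightarrow>\<^sub>0 nat) \<Rightarrow>\<^sub>0 'a::comm_ring_1"
  shows "Sum_any (\<lambda>q. (lk g q when k = l + q)) = (if mle l k then lk g (k - l) else 0)"
proof (cases "mle l k")
  case True
  have "(\<lambda>q. (lk g q when k = l + q)) = (\<lambda>q. (lk g q when q = k - l))"
  proof
    fix q
    have "k = l + q \<longleftrightarrow> q = k - l"
      using mle_add_diff[OF True] by (metis add_diff_cancel_left')
    then show "(lk g q when k = l + q) = (lk g q when q = k - l)" by simp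
  qed
  then have "Sum_any (\<lambda>q. (lk g q when k = l + q)) = Sum_any (\<lambda>q. (lk g q when q = k - l))"
    by (rule arg_cong)
  also have "\<dots> = lk g (k - l)" by simp
  finally show ?thesis using True by simp
next
  case False
  have eq: "(\<lambda>q. (lk g q when k = l + q)) = (\<lambda>q. 0)"
  proof
    fix q
    have "k \<noteq> l + q" using False mle_add by metis
    then show "(lk g q when k = l + q) = 0" by simp
  qed
  show ?thesis using False unfolding eq by simp
qed

lemma lookup_mult2:
  fixes f g :: "('n \<Rightarrow>\<^sub>0 nat) \<Rightarrow>\<^sub>0 'a::comm_ring_1"
  shows "lk (f * g) k = Sum_any (\<lambda>l. lk f l * (if mle l k then lk g (k - l) else 0))"
  unfolding lookup_mult sum_when_eq ..

lemma lookup_mult_unique: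
  fixes f g :: "('n \<Rightarrow>\<^sub>0 nat) \<Rightarrow>\<^sub>0 'a::comm_ring_1"
  assumes "\<And>l q. l \<in> ks f \<Longrightarrow> q \<in> ks g \<Longrightarrow> l + q = k \<Longrightarrow> l = \<mu>"
    and "\<mu> + \<nu> = k"
  shows "lk (f * g) k = lk f \<mu> * lk g \<nu>"
proof -
  have sub: "{l. lk f l * (if mle l k then lk g (k - l) else 0) \<noteq> 0} \<subseteq> {\<mu>}"
  proof
    fix l assume "l \<in> {l. lk f l * (if mle l k then lk g (k - l) else 0) \<noteq> 0}"
    then have "lk f l \<noteq> 0" "mle l k" "lk g (k - l) \<noteq> 0" by (auto split: if_splits)
    then have "l \<in> ks f" "k - l \<in> ks g" "l + (k - l) = k"
      using mle_add_diff by (auto simp: in_keys_iff)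
    then show "l \<in> {\<mu>}" using assms(1) by blast
  qed
  have "lk (f * g) k = (\<Sum>l\<in>{\<mu>}. lk f l * (if mle l k then lk g (k - l) else 0))"
    unfolding lookup_mult2 by (rule Sum_any.expand_superset[OF _ sub]) simp
  also have "\<dots> = lk f \<mu> * lk g \<nu>"
    using assms(2) mle_add[of \<mu> \<nu>] by auto
  finally show ?thesis .
qed

lemma lookup_mult_single:
  fixes f :: "('n \<Rightarrow>\<^sub>0 nat) \<Rightarrow>\<^sub>0 'a::comm_ring_1"
  shows "lk (f * Poly_Mapping.single e 1) \<nu> = (if mle e \<nu> then lk f (\<nu> - e) else 0)"
proof -
  have sub: "{l. lk (Poly_Mapping.single e 1) l * (if mle l \<nu> then lk f (\<nu> - l) else 0) \<noteq> (0::'a)} \<subseteq> {e}"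
    by (auto simp: lookup_single when_def)
  have "lk (f * Poly_Mapping.single e 1) \<nu> = lk (Poly_Mapping.single e 1 * f) \<nu>"
    by (simp add: mult.commute)
  also have "\<dots> = (\<Sum>l\<in>{e}. lk (Poly_Mapping.single e 1) l * (if mle l \<nu> then lk f (\<nu> - l) else 0))"
    unfolding lookup_mult2 by (rule Sum_any.expand_superset[OF _ sub]) simp
  also have "\<dots> = (if mle e \<nu> then lk f (\<nu> - e) else 0)" by simp
  finally show ?thesis .
qed

lemma div_monom:
  fixes h :: "('n \<Rightarrow>\<^sub>0 nat) \<Rightarrow>\<^sub>0 'a::comm_ring_1"
  assumes "\<forall>\<mu>\<in>ks h. mle e \<mu>"
  shows "\<exists>h'. h = h' * Poly_Mapping.single e 1"
proof -
  have fin: "finite {\<mu>. lk h (\<mu> + e) \<noteq> 0}"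
  proof (rule finite_subset)
    show "{\<mu>. lk h (\<mu> + e) \<noteq> 0} \<subseteq> (\<lambda>\<nu>. \<nu> - e) ` ks h"
    proof
      fix \<mu> assume "\<mu> \<in> {\<mu>. lk h (\<mu> + e) \<noteq> 0}"
      then have "\<mu> + e \<in> ks h" by (simp add: in_keys_iff)
      moreover have "\<mu> = (\<mu> + e) - e" by simp
      ultimately show "\<mu> \<in> (\<lambda>\<nu>. \<nu> - e) ` ks h" by blast
    qed
  qed simp
  define h' where "h' = Abs_poly_mapping (\<lambda>\<mu>. lk h (\<mu> + e))"
  have lh: "lk h' \<mu> = lk h (\<mu> + e)" for \<mu> unfolding h'_def using fin by simp
  have "h = h' * Poly_Mapping.single e 1"
  proof (rule poly_mapping_eqI)
    fix \<nu>
    show "lk h \<nu> = lk (h' * Poly_Mapping.single e 1) \<nu>"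
    proof (cases "mle e \<nu>")
      case True
      then have "\<nu> - e + e = \<nu>" using mle_add_diff[OF True] by (simp add: add.commute)
      then show ?thesis using True by (simp add: lookup_mult_single lh)
    next
      case False
      then have "lk h \<nu> = 0" using assms by (auto simp: in_keys_iff)
      then show ?thesis using False by (simp add: lookup_mult_single)
    qed
  qed
  then show ?thesis by blast
qed

definition piY :: "'n \<Rightarrow> ('n, 'a::comm_ring_1) mpoly_ring \<Rightarrow> ('n, 'a) mpoly_ring" where
  "piY Y h = Abs_poly_mapping (\<lambda>\<mu>. if lk \<mu> Y = 0 then lk h \<mu> else 0)"

lemma lookup_piY: "lk (piY Y h) \<mu> = (if lk \<mu> Y = 0 then lk h \<mu> else 0)"
proof -
  have "finite {\<mu>. (if lk \<mu> Y = 0 then lk h \<mu> else 0) \<noteq> 0}"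
    by (rule finite_subset[of _ "ks h"]) (auto simp: in_keys_iff)
  then show ?thesis unfolding piY_def by simp
qed

lemma piY_add: "piY Y (f + g) = piY Y f + piY Y g"
  by (rule poly_mapping_eqI) (simp add: lookup_piY lookup_add)

lemma piY_diff: "piY Y (f - g) = piY Y f - piY Y g"
  by (rule poly_mapping_eqI) (simp add: lookup_piY lookup_minus)

lemma piY_mult: "piY Y (f * g) = piY Y f * piY Y g"
proof (rule poly_mapping_eqI)
  fix k
  show "lk (piY Y (f * g)) k = lk (piY Y f * piY Y g) k"
  proof (cases "lk k Y = 0")
    case True
    have "\<And>l. lk f l * (if mle l k then lk g (k - l) else 0) =
       lk (piY Y f) l * (if mle l k then lk (piY Y g) (k - l) else 0)"
      using True by (auto simp: lookup_piY mle_def lookup_minus) (metis le_zero_eq not_gr0)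
    then show ?thesis using True by (simp add: lookup_piY lookup_mult2)
  next
    case False
    have "\<And>l. lk (piY Y f) l * (if mle l k then lk (piY Y g) (k - l) else 0) = 0"
      using False by (auto simp: lookup_piY mle_def lookup_minus)
    then show ?thesis using False by (simp add: lookup_piY lookup_mult2)
  qed
qed

lemma piY_one: "piY Y 1 = 1"
  by (rule poly_mapping_eqI) (simp add: lookup_piY lookup_one when_def)

lemma piY_idem: "piY Y (piY Y h) = piY Y h"
  by (rule poly_mapping_eqI) (simp add: lookup_piY)

lemma var_pow: "(var X :: ('n, 'a::comm_ring_1) mpoly_ring) ^ k = Poly_Mapping.single (Poly_Mapping.single X k) 1"
proof (induction k)
  case 0
  then show ?case by simp
next
  case (Suc k)
  then show ?case by (simp add: var_def mult_single single_add[symmetric] add.commute)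
qed



definition deg :: "('n::finite \<Rightarrow>\<^sub>0 nat) \<Rightarrow> nat" where
  "deg \<mu> = (\<Sum>i\<in>UNIV. lk \<mu> i)"

lemma deg_add: "deg (\<mu> + \<nu>) = deg \<mu> + deg \<nu>"
  unfolding deg_def by (simp add: lookup_add sum.distrib)

lemma deg_mle: "mle \<mu> \<nu> \<Longrightarrow> deg \<mu> \<le> deg \<nu>"
  unfolding deg_def mle_def by (rule sum_mono) simp

lemma deg_eq_0: "deg \<mu> = 0 \<Longrightarrow> \<mu> = 0"
  unfolding deg_def by (rule poly_mapping_eqI) simp

lemma deg_zero [simp]: "deg 0 = 0"
  unfolding deg_def by simp

lemma deg_mle_eq: "mle \<mu> \<nu> \<Longrightarrow> deg \<mu> = deg \<nu> \<Longrightarrow> \<mu> = \<nu>"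
proof -
  assume a: "mle \<mu> \<nu>" "deg \<mu> = deg \<nu>"
  have e: "\<mu> + (\<nu> - \<mu>) = \<nu>" by (rule mle_add_diff[OF a(1)])
  then have "deg (\<nu> - \<mu>) = 0" using a(2) deg_add[of \<mu> "\<nu> - \<mu>"] by simp
  then have "\<nu> - \<mu> = 0" by (rule deg_eq_0)
  then show "\<mu> = \<nu>" using e by simp
qed

lemma deg_single [simp]: "deg (Poly_Mapping.single i k) = k"
proof -
  have "deg (Poly_Mapping.single i k) = (\<Sum>i'\<in>UNIV. (if i' = i then k else 0))"
    unfolding deg_def by (rule sum.cong) (auto simp: lookup_single when_def)
  then show ?thesis by simp
qed

definition psi :: "('n::finite \<Rightarrow>\<^sub>0 nat) \<Rightarrow> (nat \<Rightarrow>\<^sub>0 nat)" where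
  "psi \<mu> = Poly_Mapping.single 0 (deg \<mu>) + (\<Sum>i\<in>UNIV. Poly_Mapping.single (Suc (to_nat i)) (lk \<mu> i))"

lemma psi_add: "psi (\<mu> + \<nu>) = psi \<mu> + psi \<nu>"
proof -
  have "psi (\<mu> + \<nu>) = (Poly_Mapping.single 0 (deg \<mu>) + Poly_Mapping.single 0 (deg \<nu>)) +
     ((\<Sum>i\<in>UNIV. Poly_Mapping.single (Suc (to_nat i)) (lk \<mu> i)) + (\<Sum>i\<in>UNIV. Poly_Mapping.single (Suc (to_nat i)) (lk \<nu> i)))"
    unfolding psi_def by (simp only: deg_add single_add lookup_add sum.distrib)
  then show ?thesis unfolding psi_def by (simp only: add_ac)
qed

lemma lookup_psi_0: "lk (psi \<mu>) 0 = deg \<mu>"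
  unfolding psi_def by (simp add: lookup_add lookup_sum lookup_single)

lemma lookup_psi_Suc: "lk (psi \<mu>) (Suc (to_nat i)) = lk \<mu> i"
proof -
  have "lk (psi \<mu>) (Suc (to_nat i)) = (\<Sum>i'\<in>UNIV. (if i' = i then lk \<mu> i' else 0))"
    unfolding psi_def by (simp add: lookup_add lookup_sum lookup_single when_def)
  then show ?thesis by simp
qed

lemma psi_inj: "psi \<mu> = psi \<nu> \<Longrightarrow> \<mu> = \<nu>"
  by (rule poly_mapping_eqI) (metis lookup_psi_Suc)

lemma psi_deg_less: "deg \<mu> < deg \<nu> \<Longrightarrow> psi \<mu> < psi \<nu>"
  unfolding less_poly_mapping.rep_eq less_fun_def
  by (rule exI[of _ 0]) (simp add: lookup_psi_0)

lemma min_key: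
  fixes f :: "('n::finite, 'a::comm_ring_1) mpoly_ring"
  assumes "f \<noteq> 0"
  shows "\<exists>\<mu>\<in>ks f. \<forall>\<nu>\<in>ks f. psi \<mu> \<le> psi \<nu>"
proof -
  have fin: "finite (psi ` ks f)" by simp
  have ne: "psi ` ks f \<noteq> {}" using assms by simp
  obtain \<mu> where "\<mu> \<in> ks f" "Min (psi ` ks f) = psi \<mu>" using Min_in[OF fin ne] by (rule imageE)
  then show ?thesis using Min_le[OF fin] by auto
qed

lemma min_key_deg:
  assumes "\<mu> \<in> ks f" "\<forall>\<nu>\<in>ks f. psi \<mu> \<le> psi \<nu>" "\<nu> \<in> ks f"
  shows "deg \<mu> \<le> deg \<nu>"
proof (rule ccontr)
  assume "\<not> deg \<mu> \<le> deg \<nu>"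
  then have "psi \<nu> < psi \<mu>" by (intro psi_deg_less) simp
  then show False using assms by (meson leD)
qed

lemma lookup_mult_min:
  fixes f g :: "('n::finite, 'a::comm_ring_1) mpoly_ring"
  assumes "\<mu> \<in> ks f" "\<forall>l\<in>ks f. psi \<mu> \<le> psi l"
    and "\<nu> \<in> ks g" "\<forall>q\<in>ks g. psi \<nu> \<le> psi q"
  shows "lk (f * g) (\<mu> + \<nu>) = lk f \<mu> * lk g \<nu>"
proof (rule lookup_mult_unique)
  fix l q assume lq: "l \<in> ks f" "q \<in> ks g" "l + q = \<mu> + \<nu>"
  have h1: "psi \<mu> \<le> psi l" "psi \<nu> \<le> psi q" using assms lq by auto
  have h2: "psi l + psi q = psi \<mu> + psi \<nu>" using lq(3) by (metis psi_add)
  have "psi l = psi \<mu>"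
  proof (rule ccontr)
    assume "psi l \<noteq> psi \<mu>"
    then have "psi \<mu> < psi l" using h1 by simp
    then have "psi \<mu> + psi \<nu> < psi l + psi q" using h1(2) by (rule add_less_le_mono)
    then show False using h2 by simp
  qed
  then show "l = \<mu>" by (rule psi_inj)
qed simp

lemma mpoly_no_zero_div:
  fixes f g :: "('n::finite, 'a::idom) mpoly_ring"
  assumes "f \<noteq> 0" "g \<noteq> 0"
  shows "f * g \<noteq> 0"
proof -
  obtain \<mu> where m: "\<mu> \<in> ks f" "\<forall>l\<in>ks f. psi \<mu> \<le> psi l" using min_key[OF assms(1)] by blast
  obtain \<nu> where n: "\<nu> \<in> ks g" "\<forall>l\<in>ks g. psi \<nu> \<le> psi l" using min_key[OF assms(2)] by blast
  have "lk (f * g) (\<mu> + \<nu>) = lk f \<mu> * lk g \<nu>" by (rule lookup_mult_min[OF m n])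
  also have "\<dots> \<noteq> 0" using m(1) n(1) by (simp add: in_keys_iff)
  finally show ?thesis by auto
qed



locale xyctx =
  fixes X Y :: "'n::finite" and m j :: nat
  assumes XY: "X \<noteq> Y" and j1: "1 \<le> j" and jm: "j < m"
begin

definition mon :: "nat \<Rightarrow> nat \<Rightarrow> ('n \<Rightarrow>\<^sub>0 nat)" where
  "mon x y = Poly_Mapping.single X x + Poly_Mapping.single Y y"

lemma lk_mon_X [simp]: "lk (mon x y) X = x"
  using XY by (simp add: mon_def lookup_add lookup_single)
lemma lk_mon_Y [simp]: "lk (mon x y) Y = y"
  using XY by (simp add: mon_def lookup_add lookup_single)
lemma lk_mon_other: "i \<noteq> X \<Longrightarrow> i \<noteq> Y \<Longrightarrow> lk (mon x y) i = 0"
  by (simp add: mon_def lookup_add lookup_single)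
lemma deg_mon [simp]: "deg (mon x y) = x + y"
  by (simp add: mon_def deg_add)
lemma mon_add: "mon x y + mon x' y' = mon (x + x') (y + y')"
  by (simp add: mon_def single_add add_ac)
lemma mon_inj: "mon x y = mon x' y' \<Longrightarrow> x = x' \<and> y = y'"
  by (metis lk_mon_X lk_mon_Y)

lemma mle_mon: "mle \<mu> (mon x y) \<Longrightarrow> \<mu> = mon (lk \<mu> X) (lk \<mu> Y)"
  by (rule poly_mapping_eqI) (metis le_zero_eq lk_mon_X lk_mon_Y lk_mon_other mle_def)

abbreviation "e1 \<equiv> mon m 0"
abbreviation "e2 \<equiv> mon (m - j) j"
abbreviation "e3 \<equiv> mon 0 m"

lemma mon_m0: "mon m 0 = Poly_Mapping.single X m" by (simp add: mon_def)
lemma mon_0m: "mon 0 m = Poly_Mapping.single Y m" by (simp add: mon_def)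

definition gens :: "('n, 'a::comm_ring_1) mpoly_ring set" where
  "gens = {var X ^ m, var X ^ (m - j) * var Y ^ j, var Y ^ m}"

lemma gens_single: "(gens :: ('n, 'a::comm_ring_1) mpoly_ring set) =
   {Poly_Mapping.single e1 1, Poly_Mapping.single e2 1, Poly_Mapping.single e3 1}"
  unfolding gens_def var_pow mult_single by (simp add: mon_def)

definition Up :: "('n \<Rightarrow>\<^sub>0 nat) \<Rightarrow> bool" where
  "Up \<mu> \<longleftrightarrow> mle e1 \<mu> \<or> mle e2 \<mu> \<or> mle e3 \<mu>"

lemma Up_add: "Up q \<Longrightarrow> Up (l + q)"
  unfolding Up_def using mle_add_right by blast

lemma mle_refl: "mle \<mu> \<mu>" by (simp add: mle_def)

lemma Ig_keys:
  assumes "h \<in> ideal_gen (gens :: ('n, 'a::comm_ring_1) mpoly_ring set)"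
  shows "\<forall>\<mu>\<in>ks h. Up \<mu>"
proof -
  let ?T = "{h :: ('n, 'a) mpoly_ring. \<forall>\<mu>\<in>ks h. Up \<mu>}"
  have "is_ideal ?T"
    unfolding is_ideal_def
  proof (intro conjI ballI allI)
    show "0 \<in> ?T" by simp
  next
    fix a b assume "a \<in> ?T" "b \<in> ?T"
    then show "a + b \<in> ?T" using keys_add[of a b] by blast
  next
    fix r a assume a: "a \<in> ?T"
    have "Up \<mu>" if mu: "\<mu> \<in> ks (r * a)" for \<mu>
    proof -
      obtain l q where "\<mu> = l + q" "q \<in> ks a" using keys_mult[of r a] mu by blast
      then show ?thesis using a Up_add by blast
    qed
    then show "r * a \<in> ?T" by blast
  qed
  moreover have "gens \<subseteq> ?T"
    unfolding gens_single Up_def using mle_refl by auto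
  ultimately show ?thesis using assms ideal_gen_least by blast
qed

lemma Up_deg: "Up \<mu> \<Longrightarrow> m \<le> deg \<mu>"
  unfolding Up_def using deg_mle[of e1 \<mu>] deg_mle[of e2 \<mu>] deg_mle[of e3 \<mu>] jm by auto

lemma Up_deg_eq: "Up \<mu> \<Longrightarrow> deg \<mu> = m \<Longrightarrow> \<mu> = e1 \<or> \<mu> = e2 \<or> \<mu> = e3"
  unfolding Up_def using deg_mle_eq[of e1 \<mu>] deg_mle_eq[of e2 \<mu>] deg_mle_eq[of e3 \<mu>] jm by auto

lemma Up_Y0: "Up \<mu> \<Longrightarrow> lk \<mu> Y = 0 \<Longrightarrow> mle e1 \<mu>"
  unfolding Up_def mle_def using j1 jm
  by (metis (no_types, lifting) le_zero_eq lk_mon_Y not_one_le_zero order_less_irrefl zero_less_iff_neq_zero)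

lemma gens_in: "g \<in> gens \<Longrightarrow> g \<in> ideal_gen gens"
  using ideal_gen_sub by (rule subsetD)

lemma e3_mem:
  fixes h :: "('n, 'a::comm_ring_1) mpoly_ring"
  assumes "\<forall>\<mu>\<in>ks h. mle e3 \<mu>"
  shows "h \<in> ideal_gen gens"
proof -
  obtain h' where "h = h' * Poly_Mapping.single e3 1" using div_monom[OF assms] by blast
  moreover have "Poly_Mapping.single e3 1 \<in> ideal_gen (gens :: ('n, 'a) mpoly_ring set)"
    by (rule gens_in) (simp add: gens_single)
  ultimately show ?thesis using ideal_mul[OF ideal_gen_is_ideal] by metis
qed

lemma one_notin:
  "(1 :: ('n, 'a::comm_ring_1) mpoly_ring) \<notin> ideal_gen gens"
proof
  assume "(1 :: ('n, 'a) mpoly_ring) \<in> ideal_gen gens"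
  then have "Up 0" using Ig_keys[of 1] by simp
  then show False using Up_deg jm by fastforce
qed

lemma Xm_in: "(Poly_Mapping.single e1 1 :: ('n, 'a::comm_ring_1) mpoly_ring) \<in> ideal_gen gens"
  by (rule gens_in) (simp add: gens_single)

lemma Ig_nz: "nz_ideal (ideal_gen (gens :: ('n, 'a::idom) mpoly_ring set))"
proof -
  have "(Poly_Mapping.single e1 1 :: ('n, 'a) mpoly_ring) \<noteq> 0"
    by (metis lookup_single_eq lookup_zero one_neq_zero)
  then show ?thesis unfolding nz_ideal_def using ideal_gen_is_ideal Xm_in by blast
qed

end



lemma ideal_gen2_sub:
  "ideal_gen {g1, g2} \<subseteq> {r1 * g1 + r2 * g2 | r1 r2. True}" (is "_ \<subseteq> ?R")
proof (rule ideal_gen_least)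
  show "is_ideal ?R"
    unfolding is_ideal_def
  proof (intro conjI ballI allI)
    have "(0::'a) = 0 * g1 + 0 * g2" by simp
    then show "0 \<in> ?R" by blast
  next
    fix x y assume "x \<in> ?R" "y \<in> ?R"
    then obtain a1 a2 b1 b2 where "x = a1 * g1 + a2 * g2" "y = b1 * g1 + b2 * g2" by auto
    then have "x + y = (a1+b1) * g1 + (a2+b2) * g2" by (simp add: algebra_simps)
    then show "x + y \<in> ?R" by blast
  next
    fix r x assume "x \<in> ?R"
    then obtain a1 a2 where "x = a1 * g1 + a2 * g2" by auto
    then have "r * x = (r*a1) * g1 + (r*a2) * g2" by (simp add: algebra_simps)
    then show "r * x \<in> ?R" by blast
  qed
  have "g1 = 1 * g1 + 0 * g2" "g2 = 0 * g1 + 1 * g2" by simp_all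
  then show "{g1, g2} \<subseteq> ?R" by blast
qed

lemma lookup_mult_zero:
  fixes f g :: "('n::finite, 'a::comm_ring_1) mpoly_ring"
  shows "lk (f * g) 0 = lk f 0 * lk g 0"
proof (rule lookup_mult_unique)
  fix l q :: "'n \<Rightarrow>\<^sub>0 nat" assume "l + q = 0"
  then have "deg l = 0" using deg_add[of l q] by simp
  then show "l = 0" by (rule deg_eq_0)
qed simp

lemma const0_ideal: "is_ideal {h :: ('n::finite, 'a::comm_ring_1) mpoly_ring. lk h 0 = 0}"
  unfolding is_ideal_def by (simp add: lookup_add lookup_mult_zero)

context xyctx
begin

lemma square_case:
  assumes m2: "m = 2 * j"
  shows "\<not> ideal_atom (ideal_gen (gens :: ('n, 'a::idom) mpoly_ring set))"
proof
  assume atom: "ideal_atom (ideal_gen (gens :: ('n, 'a) mpoly_ring set))"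
  define xj where "xj = (var X ^ j :: ('n, 'a) mpoly_ring)"
  define yj where "yj = (var Y ^ j :: ('n, 'a) mpoly_ring)"
  define A where "A = ideal_gen {xj, yj}"
  have iA: "is_ideal A" unfolding A_def by (rule ideal_gen_is_ideal)
  have xA: "xj \<in> A" unfolding A_def by (rule subsetD[OF ideal_gen_sub]) simp
  have yA: "yj \<in> A" unfolding A_def by (rule subsetD[OF ideal_gen_sub]) simp
  have mj: "m - j = j" using m2 by simp
  have gens_eq: "(gens :: ('n, 'a) mpoly_ring set) = {xj * xj, xj * yj, yj * yj}"
    unfolding gens_def xj_def yj_def mj using m2 by (simp add: power_add[symmetric] mult_2)
  have I: "is_ideal (ideal_gen (gens :: ('n, 'a) mpoly_ring set))" by (rule ideal_gen_is_ideal)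
  have eq: "ideal_gen (gens :: ('n, 'a) mpoly_ring set) = ideal_mult A A"
  proof
    show "ideal_gen gens \<subseteq> ideal_mult A A"
    proof (rule ideal_gen_least[OF ideal_mult_is_ideal])
      show "gens \<subseteq> ideal_mult A A"
        unfolding gens_eq using ideal_mult_prod xA yA by blast
    qed
  next
    show "ideal_mult A A \<subseteq> ideal_gen gens"
    proof
      fix h assume "h \<in> ideal_mult A A"
      then show "h \<in> ideal_gen gens"
      proof (rule ideal_mult_induct[OF _ I])
        fix a b assume "a \<in> A" "b \<in> A"
        then obtain r1 r2 s1 s2 where ab: "a = r1 * xj + r2 * yj" "b = s1 * xj + s2 * yj"
          using ideal_gen2_sub[of xj yj] unfolding A_def by blast
        have g: "xj * xj \<in> ideal_gen gens" "xj * yj \<in> ideal_gen gens" "yj * yj \<in> ideal_gen gens"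
          using gens_in[of "xj * xj"] gens_in[of "xj * yj"] gens_in[of "yj * yj"] unfolding gens_eq by auto
        have "a * b = (r1 * s1) * (xj * xj) + (r1 * s2 + r2 * s1) * (xj * yj) + (r2 * s2) * (yj * yj)"
          unfolding ab by (simp add: algebra_simps)
        then show "a * b \<in> ideal_gen gens"
          using g by (metis I ideal_add ideal_mul)
      qed
    qed
  qed
  have xj_single: "xj = Poly_Mapping.single (Poly_Mapping.single X j) 1"
    unfolding xj_def by (rule var_pow)
  have "xj \<noteq> 0" unfolding xj_single by (metis lookup_single_eq lookup_zero one_neq_zero)
  then have nzA: "nz_ideal A" unfolding nz_ideal_def using iA xA by blast
  have "A \<subseteq> {h. lk h 0 = 0}"
    unfolding A_def
  proof (rule ideal_gen_least[OF const0_ideal])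
    have "Poly_Mapping.single X j \<noteq> 0" "Poly_Mapping.single Y j \<noteq> 0"
      using j1 by (metis lookup_single_eq lookup_zero not_one_le_zero)+
    then have "lk xj 0 = 0" "lk yj 0 = 0"
      unfolding xj_single yj_def var_pow
      using j1 by (auto simp: lookup_single when_def)
    then show "{xj, yj} \<subseteq> {h. lk h 0 = 0}" by simp
  qed
  moreover have "lk (1 :: ('n, 'a) mpoly_ring) 0 \<noteq> 0" by simp
  ultimately have "A \<noteq> UNIV" by blast
  then show False using atom eq nzA unfolding ideal_atom_def by blast
qed

end



lemma keys_pow_Y:
  fixes c :: "('n::finite, 'a::comm_ring_1) mpoly_ring"
  assumes "\<forall>\<mu>\<in>ks c. 1 \<le> lk \<mu> Y"
  shows "\<forall>\<mu>\<in>ks (c ^ n). n \<le> lk \<mu> Y"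
proof (induction n)
  case 0
  then show ?case by simp
next
  case (Suc n)
  show ?case
  proof
    fix \<mu> assume "\<mu> \<in> ks (c ^ Suc n)"
    then obtain l q where "\<mu> = l + q" "l \<in> ks c" "q \<in> ks (c ^ n)"
      using keys_mult[of c "c ^ n"] by auto
    then have "1 \<le> lk l Y" "n \<le> lk q Y" using Suc assms by blast+
    then show "Suc n \<le> lk \<mu> Y" using \<open>\<mu> = l + q\<close> by (simp add: lookup_add)
  qed
qed

context xyctx
begin

lemma mle_e1: "mle e1 \<mu> \<longleftrightarrow> m \<le> lk \<mu> X"
  unfolding mle_def mon_m0 by (auto simp: lookup_single when_def)

lemma mle_e3: "mle e3 \<mu> \<longleftrightarrow> m \<le> lk \<mu> Y"
  unfolding mle_def mon_0m by (auto simp: lookup_single when_def)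

lemma colon_step:
  fixes f0 g :: "('n, 'a::idom) mpoly_ring"
  assumes f0: "lk f0 0 \<noteq> 0" and fg: "f0 * g \<in> ideal_gen gens"
  shows "\<forall>\<mu>\<in>ks g. lk \<mu> Y = 0 \<longrightarrow> m \<le> lk \<mu> X"
proof (rule ccontr)
  assume neg: "\<not> (\<forall>\<mu>\<in>ks g. lk \<mu> Y = 0 \<longrightarrow> m \<le> lk \<mu> X)"
  define S where "S = {\<mu>\<in>ks g. lk \<mu> Y = 0 \<and> lk \<mu> X < m}"
  have "\<exists>\<mu>. \<mu> \<in> S" using neg unfolding S_def by auto
  then have "\<exists>n. \<exists>\<mu>\<in>S. deg \<mu> = n" by blast
  define n0 where "n0 = (LEAST n. \<exists>\<mu>\<in>S. deg \<mu> = n)"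
  obtain \<mu>0 where mu0: "\<mu>0 \<in> S" "deg \<mu>0 = n0"
    using LeastI_ex[OF \<open>\<exists>n. \<exists>\<mu>\<in>S. deg \<mu> = n\<close>] unfolding n0_def by blast
  have minS: "\<And>\<nu>. \<nu> \<in> S \<Longrightarrow> deg \<mu>0 \<le> deg \<nu>"
    unfolding mu0(2) n0_def by (rule Least_le) blast
  have "lk (f0 * g) (0 + \<mu>0) = lk f0 0 * lk g \<mu>0"
  proof (rule lookup_mult_unique)
    fix l q assume lq: "l \<in> ks f0" "q \<in> ks g" "l + q = 0 + \<mu>0"
    have "mle q \<mu>0" using lq(3) mle_add[of q l] by (simp add: add.commute)
    then have "lk q Y \<le> lk \<mu>0 Y" "lk q X \<le> lk \<mu>0 X" unfolding mle_def by auto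
    then have "q \<in> S" using lq(2) mu0(1) unfolding S_def by auto
    then have "deg \<mu>0 \<le> deg q" by (rule minS)
    then have "deg l = 0" using lq(3) deg_add[of l q] by simp
    then show "l = 0" by (rule deg_eq_0)
  qed simp
  also have "\<dots> \<noteq> 0" using f0 mu0(1) unfolding S_def by (simp add: in_keys_iff)
  finally have "\<mu>0 \<in> ks (f0 * g)" by (simp add: in_keys_iff)
  then have "Up \<mu>0" using Ig_keys[OF fg] by blast
  moreover have "lk \<mu>0 Y = 0" "lk \<mu>0 X < m" using mu0(1) unfolding S_def by auto
  ultimately have "mle e1 \<mu>0" using Up_Y0 by blast
  then show False using \<open>lk \<mu>0 X < m\<close> unfolding mle_e1 by simp
qed

lemma piY_e1: "piY Y (Poly_Mapping.single e1 (1::'a::comm_ring_1)) = Poly_Mapping.single e1 1"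
  by (rule poly_mapping_eqI) (auto simp: lookup_piY lookup_single when_def)

lemma case_a0:
  fixes A B :: "('n, 'a::idom) mpoly_ring set"
  assumes iA: "is_ideal A" and iB: "is_ideal B"
    and eq: "ideal_gen gens = ideal_mult A B"
    and f0: "f0 \<in> A" "lk f0 0 \<noteq> 0"
  shows "1 \<in> A"
proof -
  let ?E = "Poly_Mapping.single e1 (1::'a)"
  have colon: "\<forall>\<mu>\<in>ks g. lk \<mu> Y = 0 \<longrightarrow> m \<le> lk \<mu> X" if g: "g \<in> B" for g
  proof (rule colon_step[OF f0(2)])
    show "f0 * g \<in> ideal_gen gens" unfolding eq by (rule ideal_mult_prod[OF f0(1) g])
  qed
  define T where "T = {h. \<exists>\<alpha>\<in>A. piY Y h = piY Y (\<alpha> * ?E)}"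
  have iT: "is_ideal T"
    unfolding is_ideal_def
  proof (intro conjI ballI allI)
    have "piY Y 0 = piY Y (0 * ?E)" by simp
    then show "0 \<in> T" unfolding T_def using ideal_0[OF iA] by blast
  next
    fix a b assume "a \<in> T" "b \<in> T"
    then obtain \<alpha> \<beta> where ab: "\<alpha> \<in> A" "piY Y a = piY Y (\<alpha> * ?E)" "\<beta> \<in> A" "piY Y b = piY Y (\<beta> * ?E)"
      unfolding T_def by blast
    have "piY Y (a + b) = piY Y ((\<alpha> + \<beta>) * ?E)"
      using ab by (simp add: piY_add distrib_right)
    then show "a + b \<in> T" unfolding T_def using ideal_add[OF iA ab(1,3)] by blast
  next
    fix r a assume "a \<in> T"
    then obtain \<alpha> where a: "\<alpha> \<in> A" "piY Y a = piY Y (\<alpha> * ?E)" unfolding T_def by blast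
    have "piY Y (r * a) = piY Y ((r * \<alpha>) * ?E)"
      using a by (simp add: piY_mult mult.assoc)
    then show "r * a \<in> T" unfolding T_def using ideal_mul[OF iA a(1)] by blast
  qed
  have "h \<in> T" if "h \<in> ideal_mult A B" for h
  proof (rule ideal_mult_induct[OF that iT])
    fix f g assume fg: "f \<in> A" "g \<in> B"
    have "\<forall>\<mu>\<in>ks (piY Y g). mle e1 \<mu>"
    proof
      fix \<mu> assume "\<mu> \<in> ks (piY Y g)"
      then have "lk (piY Y g) \<mu> \<noteq> 0" by (simp add: in_keys_iff)
      then have "lk \<mu> Y = 0" "lk g \<mu> \<noteq> 0" by (simp_all add: lookup_piY split: if_splits)
      then have "m \<le> lk \<mu> X" using colon[OF fg(2)] by (simp add: in_keys_iff)
      then show "mle e1 \<mu>" unfolding mle_e1 .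
    qed
    then obtain g1 where g1: "piY Y g = g1 * ?E" using div_monom by blast
    have "piY Y (f * g) = piY Y f * piY Y (piY Y g)" by (simp add: piY_mult piY_idem)
    also have "\<dots> = piY Y ((f * g1) * ?E)" unfolding g1 by (simp add: piY_mult mult.assoc)
    finally show "f * g \<in> T" unfolding T_def using ideal_mul2[OF iA fg(1)] by blast
  qed
  moreover have "?E \<in> ideal_gen gens" by (rule Xm_in)
  then have "?E \<in> ideal_mult A B" unfolding eq .
  ultimately obtain \<alpha> where al: "\<alpha> \<in> A" "piY Y ?E = piY Y (\<alpha> * ?E)" unfolding T_def by blast
  have "?E = piY Y \<alpha> * ?E" using al(2) by (simp add: piY_mult piY_e1)
  then have "(piY Y \<alpha> - 1) * ?E = 0" by (simp add: algebra_simps)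
  moreover have "?E \<noteq> 0" by (metis lookup_single_eq lookup_zero one_neq_zero)
  ultimately have "piY Y \<alpha> - 1 = 0" using mpoly_no_zero_div[of "piY Y \<alpha> - 1" ?E] by blast
  then have pa: "piY Y \<alpha> = 1" by simp
  define c where "c = 1 - \<alpha>"
  have "piY Y c = 0" unfolding c_def by (simp add: piY_diff piY_one pa)
  have "\<forall>\<mu>\<in>ks c. 1 \<le> lk \<mu> Y"
  proof
    fix \<mu> assume "\<mu> \<in> ks c"
    then have "lk c \<mu> \<noteq> 0" by (simp add: in_keys_iff)
    moreover have "lk (piY Y c) \<mu> = 0" using \<open>piY Y c = 0\<close> by simp
    ultimately have "lk \<mu> Y \<noteq> 0" by (simp add: lookup_piY split: if_splits)
    then show "1 \<le> lk \<mu> Y" by simp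
  qed
  then have "\<forall>\<mu>\<in>ks (c ^ m). m \<le> lk \<mu> Y" by (rule keys_pow_Y)
  then have "\<forall>\<mu>\<in>ks (c ^ m). mle e3 \<mu>" unfolding mle_e3 .
  then have "c ^ m \<in> ideal_gen gens" by (rule e3_mem)
  then have cm: "c ^ m \<in> A" using eq ideal_mult_sub_left[OF iA] by blast
  have "1 - c ^ m = \<alpha> * (\<Sum>i<m. c ^ i)" unfolding one_diff_power_eq c_def by simp
  then have "1 - c ^ m \<in> A" using ideal_mul2[OF iA al(1)] by simp
  then have "(1 - c ^ m) + c ^ m \<in> A" using cm ideal_add[OF iA] by blast
  then show ?thesis by simp
qed

end



inductive_set Mset :: "'a::idom poly set \<Rightarrow> 'a poly set \<Rightarrow> 'a poly set" for P Q where
  Mprod: "p \<in> P \<Longrightarrow> q \<in> Q \<Longrightarrow> p * q \<in> Mset P Q"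
| Mzero: "0 \<in> Mset P Q"
| Madd: "x \<in> Mset P Q \<Longrightarrow> y \<in> Mset P Q \<Longrightarrow> x + y \<in> Mset P Q"
| Msmult: "x \<in> Mset P Q \<Longrightarrow> smult c x \<in> Mset P Q"

lemma Mset_swap: "h \<in> Mset P Q \<Longrightarrow> h \<in> Mset Q P"
proof (induction rule: Mset.induct)
  case (Mprod p q)
  then show ?case using Mset.Mprod[of q Q p P] by (simp add: mult.commute)
qed (auto intro: Mset.intros)

definition pprop :: "'a::idom poly \<Rightarrow> 'a poly \<Rightarrow> bool" where
  "pprop u v \<longleftrightarrow> (\<exists>c d. d \<noteq> 0 \<and> smult d u = smult c v)"

lemma fin_aux:
  fixes P Q :: "'a::idom poly set"
  assumes p0: "p0 \<in> P" "p0 \<noteq> 0" and allp: "\<forall>p\<in>P. p \<noteq> 0 \<longrightarrow> pprop p p0"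
    and degQ: "\<forall>q\<in>Q. degree q \<le> b" and h: "h \<in> Mset P Q"
  shows "\<exists>d s. d \<noteq> 0 \<and> degree s \<le> b \<and> smult d h = p0 * s"
  using h
proof (induction rule: Mset.induct)
  case (Mprod p q)
  show ?case
  proof (cases "p = 0")
    case True
    then show ?thesis by (intro exI[of _ 1] exI[of _ 0]) simp
  next
    case False
    then obtain c d where cd: "d \<noteq> 0" "smult d p = smult c p0" using allp Mprod(1) unfolding pprop_def by blast
    have "smult d (p * q) = smult d p * q" by simp
    also have "\<dots> = p0 * smult c q" using cd(2) by simp
    finally have "smult d (p * q) = p0 * smult c q" .
    moreover have "degree (smult c q) \<le> b" using degQ Mprod(2) degree_smult_le order_trans by blast
    ultimately show ?thesis using cd(1) by blast
  qed
next
  case Mzero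
  then show ?case by (intro exI[of _ 1] exI[of _ 0]) simp
next
  case (Madd x y)
  then obtain d1 s1 d2 s2 where a: "d1 \<noteq> 0" "degree s1 \<le> b" "smult d1 x = p0 * s1"
    "d2 \<noteq> 0" "degree s2 \<le> b" "smult d2 y = p0 * s2" by blast
  have "smult (d1 * d2) (x + y) = smult d2 (smult d1 x) + smult d1 (smult d2 y)"
    by (simp add: smult_add_right mult.commute)
  also have "\<dots> = smult d2 (p0 * s1) + smult d1 (p0 * s2)" using a(3,6) by simp
  also have "\<dots> = p0 * (smult d2 s1 + smult d1 s2)" by (simp add: distrib_left)
  finally have "smult (d1 * d2) (x + y) = p0 * (smult d2 s1 + smult d1 s2)" .
  moreover have "degree (smult d2 s1 + smult d1 s2) \<le> b"
    using a(2,5) degree_add_le degree_smult_le order_trans by meson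
  moreover have "d1 * d2 \<noteq> 0" using a(1,4) by simp
  ultimately show ?case by blast
next
  case (Msmult x c)
  then obtain d s where a: "d \<noteq> 0" "degree s \<le> b" "smult d x = p0 * s" by blast
  have "smult d (smult c x) = smult c (smult d x)" by (simp add: mult.commute)
  also have "\<dots> = p0 * smult c s" using a(3) by simp
  finally have "smult d (smult c x) = p0 * smult c s" .
  moreover have "degree (smult c s) \<le> b" using a(2) degree_smult_le order_trans by blast
  ultimately show ?case using a(1) by blast
qed

lemma fin_deg:
  fixes P Q :: "'a::idom poly set"
  assumes p0: "p0 \<in> P" "p0 \<noteq> 0" and allp: "\<forall>p\<in>P. p \<noteq> 0 \<longrightarrow> pprop p p0"
    and degQ: "\<forall>q\<in>Q. degree q \<le> b"
    and one: "1 \<in> Mset P Q" and top: "monom 1 m \<in> Mset P Q"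
  shows "m \<le> b"
proof -
  obtain d s where a: "d \<noteq> 0" "degree s \<le> b" "smult d 1 = p0 * s"
    using fin_aux[OF p0 allp degQ one] by blast
  have "s \<noteq> 0" using a(1,3) by auto
  then have "degree (p0 * s) = degree p0 + degree s" using p0(2) by (intro degree_mult_eq) simp_all
  moreover have "degree (p0 * s) = 0" using a(3)[symmetric] by simp
  ultimately have dp0: "degree p0 = 0" by simp
  obtain d' s' where b: "d' \<noteq> 0" "degree s' \<le> b" "smult d' (monom 1 m) = p0 * s'"
    using fin_aux[OF p0 allp degQ top] by blast
  have "s' \<noteq> 0" using b(1,3) by (auto simp: smult_monom)
  then have "degree (p0 * s') = degree p0 + degree s'" using p0(2) by (intro degree_mult_eq) simp_all
  moreover have "degree (p0 * s') = m" using b(1) b(3)[symmetric] by (simp add: smult_monom degree_monom_eq)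
  ultimately have "degree s' = m" using dp0 by simp
  then show ?thesis using b(2) by simp
qed



definition Wc :: "nat \<Rightarrow> nat \<Rightarrow> 'a::idom poly \<Rightarrow> bool" where
  "Wc j m w \<longleftrightarrow> (\<forall>k. k \<noteq> 0 \<and> k \<noteq> j \<and> k \<noteq> m \<longrightarrow> coeff w k = 0)"

definition trip :: "nat \<Rightarrow> nat \<Rightarrow> 'a::idom \<Rightarrow> 'a \<Rightarrow> 'a \<Rightarrow> 'a poly" where
  "trip j m a0 a1 a2 = monom a0 0 + monom a1 j + monom a2 m"

lemma W_repr:
  assumes "0 < j" "j < m" "Wc j m w"
  shows "w = trip j m (coeff w 0) (coeff w j) (coeff w m)"
proof (rule poly_eqI)
  fix k
  show "coeff w k = coeff (trip j m (coeff w 0) (coeff w j) (coeff w m)) k"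
    using assms unfolding Wc_def trip_def by (cases "k = 0"; cases "k = j"; cases "k = m") (auto simp: coeff_monom)
qed

lemma trip_mult:
  assumes "0 < j" "j < m" "m \<noteq> j + j"
  shows "coeff (trip j m a0 a1 a2 * trip j m b0 b1 b2) 0 = a0 * b0"
    "coeff (trip j m a0 a1 a2 * trip j m b0 b1 b2) j = a0 * b1 + a1 * b0"
    "coeff (trip j m a0 a1 a2 * trip j m b0 b1 b2) m = a0 * b2 + a2 * b0"
    "coeff (trip j m a0 a1 a2 * trip j m b0 b1 b2) (j + j) = a1 * b1"
    "coeff (trip j m a0 a1 a2 * trip j m b0 b1 b2) (j + m) = a1 * b2 + a2 * b1"
    "coeff (trip j m a0 a1 a2 * trip j m b0 b1 b2) (m + m) = a2 * b2"
proof -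
  have e: "trip j m a0 a1 a2 * trip j m b0 b1 b2 =
    monom (a0 * b0) 0 + monom (a0 * b1) j + monom (a0 * b2) m +
    monom (a1 * b0) j + monom (a1 * b1) (j + j) + monom (a1 * b2) (j + m) +
    monom (a2 * b0) m + monom (a2 * b1) (j + m) + monom (a2 * b2) (m + m)"
    unfolding trip_def by (simp add: algebra_simps mult_monom)
  have f: "j \<noteq> 0" "m \<noteq> 0" "j \<noteq> m" "m \<noteq> j" "j + j \<noteq> m" "m \<noteq> j + j" "j + m \<noteq> m + m" "m + m \<noteq> j + m"
    "j + j \<noteq> j + m" "j + m \<noteq> j + j" "j + j \<noteq> m + m" "m + m \<noteq> j + j" "j + m \<noteq> j" "m + m \<noteq> m"
    "j + j \<noteq> j" "j + m \<noteq> m" "m + m \<noteq> j" "j + j \<noteq> 0" "j + m \<noteq> 0" "m + m \<noteq> 0"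
    using assms by auto
  show "coeff (trip j m a0 a1 a2 * trip j m b0 b1 b2) 0 = a0 * b0"
    "coeff (trip j m a0 a1 a2 * trip j m b0 b1 b2) j = a0 * b1 + a1 * b0"
    "coeff (trip j m a0 a1 a2 * trip j m b0 b1 b2) m = a0 * b2 + a2 * b0"
    "coeff (trip j m a0 a1 a2 * trip j m b0 b1 b2) (j + j) = a1 * b1"
    "coeff (trip j m a0 a1 a2 * trip j m b0 b1 b2) (j + m) = a1 * b2 + a2 * b1"
    "coeff (trip j m a0 a1 a2 * trip j m b0 b1 b2) (m + m) = a2 * b2"
    unfolding e using f by (simp_all add: coeff_monom)
qed

definition Lf :: "'a::idom \<Rightarrow> 'a \<Rightarrow> 'a \<Rightarrow> 'a \<Rightarrow> 'a \<Rightarrow> 'a \<Rightarrow> 'a" where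
  "Lf x0 x1 x2 p0 p1 p2 = x0 * p0 + x1 * p1 + x2 * p2"

definition par :: "'a::idom \<Rightarrow> 'a \<Rightarrow> 'a \<Rightarrow> 'a \<Rightarrow> 'a \<Rightarrow> 'a \<Rightarrow> bool" where
  "par x0 x1 x2 z0 z1 z2 \<longleftrightarrow> x1 * z2 = x2 * z1 \<and> x0 * z2 = x2 * z0 \<and> x0 * z1 = x1 * z0"

lemma not_par_point:
  assumes "\<not> par x0 x1 x2 z0 z1 z2"
  shows "\<exists>p0 p1 p2. Lf x0 x1 x2 p0 p1 p2 = 0 \<and> Lf z0 z1 z2 p0 p1 p2 \<noteq> 0"
proof -
  consider "x1 * z2 \<noteq> x2 * z1" | "x0 * z2 \<noteq> x2 * z0" | "x0 * z1 \<noteq> x1 * z0"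
    using assms unfolding par_def by blast
  then show ?thesis
  proof cases
    case 1
    have "Lf x0 x1 x2 0 x2 (- x1) = 0" "Lf z0 z1 z2 0 x2 (- x1) \<noteq> 0"
      using 1 unfolding Lf_def by (simp_all add: algebra_simps)
    then show ?thesis by blast
  next
    case 2
    have "Lf x0 x1 x2 x2 0 (- x0) = 0" "Lf z0 z1 z2 x2 0 (- x0) \<noteq> 0"
      using 2 unfolding Lf_def by (simp_all add: algebra_simps)
    then show ?thesis by blast
  next
    case 3
    have "Lf x0 x1 x2 x1 (- x0) 0 = 0" "Lf z0 z1 z2 x1 (- x0) 0 \<noteq> 0"
      using 3 unfolding Lf_def by (simp_all add: algebra_simps)
    then show ?thesis by blast
  qed
qed

lemma quad:
  fixes x0 x1 x2 y0 y1 y2 z0 z1 z2 w0 w1 w2 :: "'a::idom"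
  assumes e0: "x0 * y0 = z0 * w0"
    and e1: "x0 * y1 + x1 * y0 = z0 * w1 + z1 * w0"
    and e2: "x0 * y2 + x2 * y0 = z0 * w2 + z2 * w0"
    and e3: "x1 * y1 = z1 * w1"
    and e4: "x1 * y2 + x2 * y1 = z1 * w2 + z2 * w1"
    and e5: "x2 * y2 = z2 * w2"
  shows "par x0 x1 x2 z0 z1 z2 \<or> par x0 x1 x2 w0 w1 w2"
proof (rule ccontr)
  assume "\<not> ?thesis"
  then have n1: "\<not> par x0 x1 x2 z0 z1 z2" and n2: "\<not> par x0 x1 x2 w0 w1 w2" by auto
  have ident: "Lf x0 x1 x2 p0 p1 p2 * Lf y0 y1 y2 p0 p1 p2 = Lf z0 z1 z2 p0 p1 p2 * Lf w0 w1 w2 p0 p1 p2"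
    for p0 p1 p2
  proof -
    have "Lf x0 x1 x2 p0 p1 p2 * Lf y0 y1 y2 p0 p1 p2 =
      (x0 * y0) * (p0 * p0) + (x0 * y1 + x1 * y0) * (p0 * p1) + (x0 * y2 + x2 * y0) * (p0 * p2)
      + (x1 * y1) * (p1 * p1) + (x1 * y2 + x2 * y1) * (p1 * p2) + (x2 * y2) * (p2 * p2)"
      unfolding Lf_def by (simp add: algebra_simps)
    also have "\<dots> = (z0 * w0) * (p0 * p0) + (z0 * w1 + z1 * w0) * (p0 * p1) + (z0 * w2 + z2 * w0) * (p0 * p2)
      + (z1 * w1) * (p1 * p1) + (z1 * w2 + z2 * w1) * (p1 * p2) + (z2 * w2) * (p2 * p2)"
      unfolding e0 e1 e2 e3 e4 e5 ..
    also have "\<dots> = Lf z0 z1 z2 p0 p1 p2 * Lf w0 w1 w2 p0 p1 p2"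
      unfolding Lf_def by (simp add: algebra_simps)
    finally show ?thesis .
  qed
  obtain p0 p1 p2 where p: "Lf x0 x1 x2 p0 p1 p2 = 0" "Lf z0 z1 z2 p0 p1 p2 \<noteq> 0"
    using not_par_point[OF n1] by blast
  obtain q0 q1 q2 where q: "Lf x0 x1 x2 q0 q1 q2 = 0" "Lf w0 w1 w2 q0 q1 q2 \<noteq> 0"
    using not_par_point[OF n2] by blast
  have pw: "Lf w0 w1 w2 p0 p1 p2 = 0" using ident[of p0 p1 p2] p by simp
  have qz: "Lf z0 z1 z2 q0 q1 q2 = 0" using ident[of q0 q1 q2] q by simp
  have lin: "Lf a0 a1 a2 (p0 + q0) (p1 + q1) (p2 + q2) = Lf a0 a1 a2 p0 p1 p2 + Lf a0 a1 a2 q0 q1 q2" for a0 a1 a2 :: 'a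
    unfolding Lf_def by (simp add: algebra_simps)
  have "Lf x0 x1 x2 (p0 + q0) (p1 + q1) (p2 + q2) = 0" using p q lin by simp
  moreover have "Lf z0 z1 z2 (p0 + q0) (p1 + q1) (p2 + q2) \<noteq> 0" using p qz lin by simp
  moreover have "Lf w0 w1 w2 (p0 + q0) (p1 + q1) (p2 + q2) \<noteq> 0" using q pw lin by simp
  ultimately show False using ident[of "p0 + q0" "p1 + q1" "p2 + q2"] by simp
qed

lemma par_smult:
  assumes "par x0 x1 x2 z0 z1 z2" "z0 \<noteq> 0 \<or> z1 \<noteq> 0 \<or> z2 \<noteq> 0"
  shows "\<exists>c d. d \<noteq> 0 \<and> d * x0 = c * z0 \<and> d * x1 = c * z1 \<and> d * x2 = c * z2"
proof -
  consider "z0 \<noteq> 0" | "z1 \<noteq> 0" | "z2 \<noteq> 0" using assms(2) by blast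
  then show ?thesis
  proof cases
    case 1
    then show ?thesis using assms(1) unfolding par_def
      by (intro exI[of _ x0] exI[of _ z0]) (simp add: algebra_simps)
  next
    case 2
    then show ?thesis using assms(1) unfolding par_def
      by (intro exI[of _ x1] exI[of _ z1]) (simp add: algebra_simps)
  next
    case 3
    then show ?thesis using assms(1) unfolding par_def
      by (intro exI[of _ x2] exI[of _ z2]) (simp add: algebra_simps)
  qed
qed



lemma trip_zero: "trip j m 0 0 0 = 0"
  unfolding trip_def by simp

lemma smult_trip: "smult d (trip j m a0 a1 a2) = trip j m (d * a0) (d * a1) (d * a2)"
  unfolding trip_def by (simp add: smult_add_right smult_monom)

lemma pairwise:
  fixes u1 u2 v1 v2 :: "'a::idom poly"
  assumes jm: "0 < j" "j < m" "m \<noteq> j + j"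
    and nz: "u1 \<noteq> 0" "u2 \<noteq> 0" "v1 \<noteq> 0" "v2 \<noteq> 0"
    and W: "Wc j m (u1 * v1)" "Wc j m (u2 * v2)" "Wc j m (u1 * v2)" "Wc j m (u2 * v1)"
  shows "pprop u1 u2 \<or> pprop v1 v2"
proof -
  define x0 where "x0 = coeff (u1 * v1) 0"
  define x1 where "x1 = coeff (u1 * v1) j"
  define x2 where "x2 = coeff (u1 * v1) m"
  define y0 where "y0 = coeff (u2 * v2) 0"
  define y1 where "y1 = coeff (u2 * v2) j"
  define y2 where "y2 = coeff (u2 * v2) m"
  define z0 where "z0 = coeff (u1 * v2) 0"
  define z1 where "z1 = coeff (u1 * v2) j"
  define z2 where "z2 = coeff (u1 * v2) m"
  define w0 where "w0 = coeff (u2 * v1) 0"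
  define w1 where "w1 = coeff (u2 * v1) j"
  define w2 where "w2 = coeff (u2 * v1) m"
  have rx: "u1 * v1 = trip j m x0 x1 x2" unfolding x0_def x1_def x2_def by (rule W_repr[OF jm(1,2) W(1)])
  have ry: "u2 * v2 = trip j m y0 y1 y2" unfolding y0_def y1_def y2_def by (rule W_repr[OF jm(1,2) W(2)])
  have rz: "u1 * v2 = trip j m z0 z1 z2" unfolding z0_def z1_def z2_def by (rule W_repr[OF jm(1,2) W(3)])
  have rw: "u2 * v1 = trip j m w0 w1 w2" unfolding w0_def w1_def w2_def by (rule W_repr[OF jm(1,2) W(4)])
  have "(u1 * v1) * (u2 * v2) = (u1 * v2) * (u2 * v1)" by (simp add: algebra_simps)
  then have E: "trip j m x0 x1 x2 * trip j m y0 y1 y2 = trip j m z0 z1 z2 * trip j m w0 w1 w2"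
    unfolding rx ry rz rw .
  have "\<And>n. coeff (trip j m x0 x1 x2 * trip j m y0 y1 y2) n = coeff (trip j m z0 z1 z2 * trip j m w0 w1 w2) n"
    using E by simp
  note cE = this[unfolded trip_mult[OF jm]]
  have "par x0 x1 x2 z0 z1 z2 \<or> par x0 x1 x2 w0 w1 w2"
  proof (rule quad)
    show "x0 * y0 = z0 * w0" using cE[of 0] by (simp add: trip_mult[OF jm])
    show "x0 * y1 + x1 * y0 = z0 * w1 + z1 * w0" using cE[of j] by (simp add: trip_mult[OF jm])
    show "x0 * y2 + x2 * y0 = z0 * w2 + z2 * w0" using cE[of m] by (simp add: trip_mult[OF jm])
    show "x1 * y1 = z1 * w1" using cE[of "j + j"] by (simp add: trip_mult[OF jm])
    show "x1 * y2 + x2 * y1 = z1 * w2 + z2 * w1" using cE[of "j + m"] by (simp add: trip_mult[OF jm])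
    show "x2 * y2 = z2 * w2" using cE[of "m + m"] by (simp add: trip_mult[OF jm])
  qed
  then show ?thesis
  proof
    assume par: "par x0 x1 x2 z0 z1 z2"
    have "z0 \<noteq> 0 \<or> z1 \<noteq> 0 \<or> z2 \<noteq> 0"
    proof (rule ccontr)
      assume "\<not> ?thesis"
      then have "u1 * v2 = 0" unfolding rz by (simp add: trip_zero)
      then show False using nz by simp
    qed
    then obtain c d where cd: "d \<noteq> 0" "d * x0 = c * z0" "d * x1 = c * z1" "d * x2 = c * z2"
      using par_smult[OF par] by blast
    have "smult d (u1 * v1) = smult c (u1 * v2)"
      unfolding rx rz smult_trip cd ..
    then have "u1 * (smult d v1 - smult c v2) = 0" by (simp add: algebra_simps)
    then have "smult d v1 = smult c v2" using nz(1) by simp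
    then show ?thesis using cd(1) unfolding pprop_def by blast
  next
    assume par: "par x0 x1 x2 w0 w1 w2"
    have "w0 \<noteq> 0 \<or> w1 \<noteq> 0 \<or> w2 \<noteq> 0"
    proof (rule ccontr)
      assume "\<not> ?thesis"
      then have "u2 * v1 = 0" unfolding rw by (simp add: trip_zero)
      then show False using nz by simp
    qed
    then obtain c d where cd: "d \<noteq> 0" "d * x0 = c * w0" "d * x1 = c * w1" "d * x2 = c * w2"
      using par_smult[OF par] by blast
    have "smult d (u1 * v1) = smult c (u2 * v1)"
      unfolding rx rw smult_trip cd ..
    then have "v1 * (smult d u1 - smult c u2) = 0" by (simp add: algebra_simps)
    then have "smult d u1 = smult c u2" using nz(3) by simp
    then show ?thesis using cd(1) unfolding pprop_def by blast
  qed
qed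

lemma Mset_zero:
  assumes "\<forall>p\<in>P. p = 0" "h \<in> Mset P Q"
  shows "h = 0"
  using assms(2) by (induction rule: Mset.induct) (use assms(1) in auto)

lemma lemmaU:
  fixes P Q :: "'a::idom poly set"
  assumes jm: "0 < j" "j < m" "m \<noteq> j + j"
    and ab: "a + b = m" "0 < a" "0 < b"
    and degP: "\<forall>p\<in>P. degree p \<le> a" and degQ: "\<forall>q\<in>Q. degree q \<le> b"
    and W: "\<forall>p\<in>P. \<forall>q\<in>Q. Wc j m (p * q)"
    and one: "1 \<in> Mset P Q" and top: "monom 1 m \<in> Mset P Q"
  shows False
proof -
  have "\<exists>p0\<in>P. p0 \<noteq> 0"
  proof (rule ccontr)
    assume "\<not> ?thesis"
    then have "(1::'a poly) = 0" using Mset_zero[OF _ one] by blast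
    then show False by simp
  qed
  then obtain p0 where p0: "p0 \<in> P" "p0 \<noteq> 0" by blast
  have "\<exists>q0\<in>Q. q0 \<noteq> 0"
  proof (rule ccontr)
    assume "\<not> ?thesis"
    then have "(1::'a poly) = 0" using Mset_zero[OF _ Mset_swap[OF one]] by blast
    then show False by simp
  qed
  then obtain q0 where q0: "q0 \<in> Q" "q0 \<noteq> 0" by blast
  show False
  proof (cases "\<exists>v1\<in>Q. \<exists>v2\<in>Q. v1 \<noteq> 0 \<and> v2 \<noteq> 0 \<and> \<not> pprop v1 v2")
    case True
    then obtain v1 v2 where v: "v1 \<in> Q" "v2 \<in> Q" "v1 \<noteq> 0" "v2 \<noteq> 0" "\<not> pprop v1 v2" by blast
    have "\<forall>p\<in>P. p \<noteq> 0 \<longrightarrow> pprop p p0"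
    proof (intro ballI impI)
      fix p assume "p \<in> P" "p \<noteq> 0"
      then show "pprop p p0"
        using pairwise[OF jm \<open>p \<noteq> 0\<close> p0(2) v(3,4)] W v p0 by blast
    qed
    then have "m \<le> b" using fin_deg[OF p0 _ degQ one top] by blast
    then show False using ab by simp
  next
    case False
    then have "\<forall>q\<in>Q. q \<noteq> 0 \<longrightarrow> pprop q q0" using q0 by blast
    then have "m \<le> a" using fin_deg[OF q0 _ degP Mset_swap[OF one] Mset_swap[OF top]] by blast
    then show False using ab by simp
  qed
qed



lemma deg_diff: "mle l k \<Longrightarrow> deg (k - l) = deg k - deg l"
  using mle_add_diff[of l k] deg_add[of l "k - l"] by simp

lemma nat_aux: "(a::nat) \<le> d \<Longrightarrow> b \<le> a + b - d \<Longrightarrow> d \<le> a + b \<Longrightarrow> d = a"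
  by presburger

context xyctx
begin

definition form :: "nat \<Rightarrow> ('n, 'a::idom) mpoly_ring \<Rightarrow> 'a poly" where
  "form d f = Poly (map (\<lambda>i. lk f (mon (d - i) i)) [0..<Suc d])"

lemma coeff_form: "coeff (form d f) i = (if i \<le> d then lk f (mon (d - i) i) else 0)"
  unfolding form_def by (auto simp: nth_default_def simp del: upt_Suc)

lemma degree_form: "degree (form d f) \<le> d"
  by (rule degree_le) (simp add: coeff_form)

lemma form_add: "form d (f + g) = form d f + form d g"
  by (rule poly_eqI) (simp add: coeff_form lookup_add)

lemma form_0: "form d 0 = 0"
  by (rule poly_eqI) (simp add: coeff_form)

lemma mon_diff: "x' \<le> x \<Longrightarrow> y' \<le> y \<Longrightarrow> mon x y - mon x' y' = mon (x - x') (y - y')"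
proof (rule poly_mapping_eqI)
  fix i assume "x' \<le> x" "y' \<le> y"
  show "lk (mon x y - mon x' y') i = lk (mon (x - x') (y - y')) i"
    using XY by (cases "i = X"; cases "i = Y") (auto simp: lookup_minus lk_mon_other)
qed

lemma mle_mon_mon: "mle (mon x' y') (mon x y) \<longleftrightarrow> x' \<le> x \<and> y' \<le> y"
proof
  assume "mle (mon x' y') (mon x y)"
  then show "x' \<le> x \<and> y' \<le> y" unfolding mle_def by (metis lk_mon_X lk_mon_Y)
next
  assume "x' \<le> x \<and> y' \<le> y"
  then show "mle (mon x' y') (mon x y)" unfolding mle_def
    by (metis le_zero_eq lk_mon_X lk_mon_Y lk_mon_other order_refl)
qed

lemma form_prod:
  fixes f g :: "('n, 'a::idom) mpoly_ring"
  assumes fa: "\<forall>\<mu>\<in>ks f. a \<le> deg \<mu>" and gb: "\<forall>\<mu>\<in>ks g. b \<le> deg \<mu>" and k: "k \<le> a + b"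
  shows "coeff (form a f * form b g) k = lk (f * g) (mon (a + b - k) k)"
proof -
  define \<kappa> where "\<kappa> = mon (a + b - k) k"
  define t where "t = (\<lambda>l. lk f l * (if mle l \<kappa> then lk g (\<kappa> - l) else 0))"
  define \<phi> where "\<phi> = (\<lambda>i. mon (a - i) i)"
  have inj: "inj_on \<phi> {..k}" unfolding \<phi>_def inj_on_def by (metis lk_mon_Y)
  have sub: "{l. t l \<noteq> 0} \<subseteq> \<phi> ` {..k}"
  proof
    fix l assume "l \<in> {l. t l \<noteq> 0}"
    then have h: "lk f l \<noteq> 0" "mle l \<kappa>" "lk g (\<kappa> - l) \<noteq> 0" unfolding t_def by (auto split: if_splits)
    then have "a \<le> deg l" "b \<le> deg (\<kappa> - l)" using fa gb by (auto simp: in_keys_iff)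
    moreover have "deg (\<kappa> - l) = deg \<kappa> - deg l" by (rule deg_diff[OF h(2)])
    moreover have "deg \<kappa> = a + b" unfolding \<kappa>_def using k by simp
    moreover have "deg l \<le> deg \<kappa>" using h(2) by (rule deg_mle)
    ultimately have "a \<le> deg l" "b \<le> a + b - deg l" "deg l \<le> a + b" by simp_all
    then have dl: "deg l = a" by (rule nat_aux)
    have lm: "l = mon (lk l X) (lk l Y)" using h(2) unfolding \<kappa>_def by (rule mle_mon)
    then have "lk l Y \<le> k" using h(2) unfolding \<kappa>_def by (metis mle_mon_mon)
    moreover have "lk l X = a - lk l Y" using dl lm by (metis add_diff_cancel_right' deg_mon)
    ultimately show "l \<in> \<phi> ` {..k}" unfolding \<phi>_def using lm by force
  qed
  have "lk (f * g) \<kappa> = Sum_any t" unfolding t_def by (rule lookup_mult2)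
  also have "\<dots> = sum t (\<phi> ` {..k})" by (rule Sum_any.expand_superset[OF _ sub]) simp
  also have "\<dots> = sum (t \<circ> \<phi>) {..k}" by (rule sum.reindex[OF inj])
  also have "\<dots> = (\<Sum>i\<le>k. coeff (form a f) i * coeff (form b g) (k - i))"
  proof (rule sum.cong[OF refl])
    fix i assume "i \<in> {..k}"
    then have ik: "i \<le> k" by simp
    show "(t \<circ> \<phi>) i = coeff (form a f) i * coeff (form b g) (k - i)"
    proof (cases "i \<le> a")
      case True
      show ?thesis
      proof (cases "k - i \<le> b")
        case True2: True
        have "mle (\<phi> i) \<kappa>" unfolding \<phi>_def \<kappa>_def mle_mon_mon using True True2 ik k by presburger
        moreover have "\<kappa> - \<phi> i = mon (b - (k - i)) (k - i)"
          unfolding \<phi>_def \<kappa>_def using True True2 ik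
          by (subst mon_diff) (auto intro!: arg_cong2[where f=mon])
        ultimately show ?thesis using True True2 ik unfolding t_def
          by (simp add: coeff_form \<phi>_def)
      next
        case False
        have "\<not> mle (\<phi> i) \<kappa>" unfolding \<phi>_def \<kappa>_def mle_mon_mon using True False ik k by presburger
        then show ?thesis using False unfolding t_def by (simp add: coeff_form)
      qed
    next
      case False
      have "(t \<circ> \<phi>) i = 0"
      proof (cases "mle (\<phi> i) \<kappa>")
        case True
        have "deg (\<kappa> - \<phi> i) = deg \<kappa> - deg (\<phi> i)" by (rule deg_diff[OF True])
        also have "\<dots> < b" unfolding \<kappa>_def \<phi>_def using False k ik by simp
        finally have "lk g (\<kappa> - \<phi> i) = 0" using gb by (meson in_keys_iff leD)
        then show ?thesis unfolding t_def by simp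
      next
        case False
        then show ?thesis unfolding t_def by simp
      qed
      then show ?thesis using False by (simp add: coeff_form)
    qed
  qed
  also have "\<dots> = coeff (form a f * form b g) k"
    by (simp add: coeff_mult atMost_atLeast0)
  finally show ?thesis unfolding \<kappa>_def ..
qed

end



lemma keys_ideal:
  assumes "\<And>l q. P q \<Longrightarrow> P (l + q)"
  shows "is_ideal {h :: ('n::finite, 'a::comm_ring_1) mpoly_ring. \<forall>\<mu>\<in>ks h. P \<mu>}" (is "is_ideal ?T")
  unfolding is_ideal_def
proof (intro conjI ballI allI)
  show "0 \<in> ?T" by simp
next
  fix a b assume "a \<in> ?T" "b \<in> ?T"
  then show "a + b \<in> ?T" using keys_add[of a b] by blast
next
  fix r a assume a: "a \<in> ?T"
  have "P \<mu>" if mu: "\<mu> \<in> ks (r * a)" for \<mu>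
  proof -
    obtain l q where "\<mu> = l + q" "q \<in> ks a" using keys_mult[of r a] mu by blast
    then show ?thesis using a assms by blast
  qed
  then show "r * a \<in> ?T" by blast
qed

lemma low_deg:
  fixes A :: "('n::finite, 'a::comm_ring_1) mpoly_ring set"
  assumes "nz_ideal A"
  shows "\<exists>a f0 \<mu>0. f0 \<in> A \<and> \<mu>0 \<in> ks f0 \<and> deg \<mu>0 = a \<and> (\<forall>\<nu>\<in>ks f0. psi \<mu>0 \<le> psi \<nu>) \<and>
     (\<forall>f\<in>A. \<forall>\<mu>\<in>ks f. a \<le> deg \<mu>)"
proof -
  have "0 \<in> A" "A \<noteq> {0}" using assms unfolding nz_ideal_def is_ideal_def by auto
  then obtain f where f: "f \<in> A" "f \<noteq> 0" by blast
  then obtain \<mu> where "\<mu> \<in> ks f" by fastforce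
  then have ex: "\<exists>n. \<exists>f\<in>A. \<exists>\<mu>\<in>ks f. deg \<mu> = n" using f by blast
  define a where "a = (LEAST n. \<exists>f\<in>A. \<exists>\<mu>\<in>ks f. deg \<mu> = n)"
  obtain f0 \<mu>1 where f0: "f0 \<in> A" "\<mu>1 \<in> ks f0" "deg \<mu>1 = a"
    using LeastI_ex[OF ex] unfolding a_def by blast
  have low: "\<forall>f\<in>A. \<forall>\<mu>\<in>ks f. a \<le> deg \<mu>"
    unfolding a_def by (intro ballI Least_le) blast
  have "f0 \<noteq> 0" using f0(2) by auto
  then obtain \<mu>0 where m0: "\<mu>0 \<in> ks f0" "\<forall>\<nu>\<in>ks f0. psi \<mu>0 \<le> psi \<nu>" using min_key by blast
  have "deg \<mu>0 \<le> deg \<mu>1" by (rule min_key_deg[OF m0 f0(2)])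
  moreover have "a \<le> deg \<mu>0" using low f0(1) m0(1) by blast
  ultimately have "deg \<mu>0 = a" using f0(3) by simp
  then show ?thesis using f0(1) m0 low by blast
qed

context xyctx
begin

lemma form_mult_low:
  fixes h r :: "('n, 'a::idom) mpoly_ring"
  assumes hm: "\<forall>\<mu>\<in>ks h. m \<le> deg \<mu>"
  shows "form m (r * h) = smult (lk r 0) (form m h)"
proof (rule poly_eqI)
  fix k
  show "coeff (form m (r * h)) k = coeff (smult (lk r 0) (form m h)) k"
  proof (cases "k \<le> m")
    case True
    have "lk (r * h) (mon (m - k) k) = lk r 0 * lk h (mon (m - k) k)"
    proof (rule lookup_mult_unique)
      fix l q assume lq: "l \<in> ks r" "q \<in> ks h" "l + q = mon (m - k) k"
      have "m \<le> deg q" using hm lq(2) by blast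
      moreover have "deg l + deg q = m" using lq(3) True by (metis deg_add deg_mon le_add_diff_inverse2)
      ultimately have "deg l = 0" by simp
      then show "l = 0" by (rule deg_eq_0)
    qed simp
    then show ?thesis using True by (simp add: coeff_form)
  next
    case False
    then show ?thesis by (simp add: coeff_form)
  qed
qed

lemma form_prod_full:
  fixes f g :: "('n, 'a::idom) mpoly_ring"
  assumes fa: "\<forall>\<mu>\<in>ks f. a \<le> deg \<mu>" and gb: "\<forall>\<mu>\<in>ks g. b \<le> deg \<mu>" and ab: "a + b = m"
  shows "form m (f * g) = form a f * form b g"
proof (rule poly_eqI)
  fix k
  show "coeff (form m (f * g)) k = coeff (form a f * form b g) k"
  proof (cases "k \<le> m")
    case True
    then show ?thesis using form_prod[OF fa gb, of k] ab by (simp add: coeff_form)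
  next
    case False
    have "degree (form a f * form b g) \<le> a + b"
      using degree_mult_le[of "form a f" "form b g"] degree_form[of a f] degree_form[of b g] by linarith
    then have "coeff (form a f * form b g) k = 0" using False ab by (simp add: coeff_eq_0)
    then show ?thesis using False by (simp add: coeff_form)
  qed
qed

lemma form_e1: "form m (Poly_Mapping.single e1 1 :: ('n, 'a::idom) mpoly_ring) = 1"
proof (rule poly_eqI)
  fix i
  show "coeff (form m (Poly_Mapping.single e1 1 :: ('n, 'a) mpoly_ring)) i = coeff 1 i"
    by (cases "i = 0") (auto simp: coeff_form lookup_single when_def coeff_1 dest: mon_inj)
qed

lemma form_e3: "form m (Poly_Mapping.single e3 1 :: ('n, 'a::idom) mpoly_ring) = monom 1 m"
proof (rule poly_eqI)
  fix i
  show "coeff (form m (Poly_Mapping.single e3 1 :: ('n, 'a) mpoly_ring)) i = coeff (monom 1 m) i"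
    by (auto simp: coeff_form lookup_single when_def coeff_monom dest: mon_inj)
qed

lemma e3_in: "(Poly_Mapping.single e3 1 :: ('n, 'a::comm_ring_1) mpoly_ring) \<in> ideal_gen gens"
  by (rule gens_in) (simp add: gens_single)

lemma case_pos:
  fixes A B :: "('n, 'a::idom) mpoly_ring set"
  assumes m2: "m \<noteq> 2 * j" and iA: "is_ideal A" and iB: "is_ideal B"
    and eq: "ideal_gen gens = ideal_mult A B"
    and la: "\<forall>f\<in>A. \<forall>\<mu>\<in>ks f. a \<le> deg \<mu>" and lb: "\<forall>g\<in>B. \<forall>\<mu>\<in>ks g. b \<le> deg \<mu>"
    and ab: "a + b = m" "0 < a" "0 < b"
  shows False
proof -
  define P where "P = form a ` A"
  define Q where "Q = form b ` B"
  have degP: "\<forall>p\<in>P. degree p \<le> a" unfolding P_def using degree_form by blast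
  have degQ: "\<forall>q\<in>Q. degree q \<le> b" unfolding Q_def using degree_form by blast
  have W: "\<forall>p\<in>P. \<forall>q\<in>Q. Wc j m (p * q)"
  proof (intro ballI)
    fix p q assume "p \<in> P" "q \<in> Q"
    then obtain f g where fg: "f \<in> A" "g \<in> B" "p = form a f" "q = form b g"
      unfolding P_def Q_def by blast
    have pq: "p * q = form m (f * g)" unfolding fg(3,4) using form_prod_full la lb fg(1,2) ab(1) by metis
    have fgI: "f * g \<in> ideal_gen gens" unfolding eq by (rule ideal_mult_prod[OF fg(1,2)])
    show "Wc j m (p * q)"
      unfolding Wc_def
    proof (intro allI impI)
      fix k assume k: "k \<noteq> 0 \<and> k \<noteq> j \<and> k \<noteq> m"
      show "coeff (p * q) k = 0"
      proof (rule ccontr)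
        assume nz: "coeff (p * q) k \<noteq> 0"
        then have km: "k \<le> m" unfolding pq by (simp add: coeff_form split: if_splits)
        then have "lk (f * g) (mon (m - k) k) \<noteq> 0" using nz unfolding pq by (simp add: coeff_form)
        then have "Up (mon (m - k) k)" using Ig_keys[OF fgI] by (simp add: in_keys_iff)
        moreover have "deg (mon (m - k) k) = m" using km by simp
        ultimately have "mon (m - k) k = e1 \<or> mon (m - k) k = e2 \<or> mon (m - k) k = e3" by (rule Up_deg_eq)
        then show False using k km by (auto dest: mon_inj)
      qed
    qed
  qed
  define T where "T = {h. (\<forall>\<mu>\<in>ks h. m \<le> deg \<mu>) \<and> form m h \<in> Mset P Q}"
  have iT: "is_ideal T"
    unfolding is_ideal_def
  proof (intro conjI ballI allI)
    show "0 \<in> T" unfolding T_def by (simp add: form_0 Mset.Mzero)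
  next
    fix x y assume "x \<in> T" "y \<in> T"
    then show "x + y \<in> T" unfolding T_def using keys_add[of x y]
      by (auto simp: form_add intro: Mset.Madd)
  next
    fix r x assume x: "x \<in> T"
    have k: "\<forall>\<mu>\<in>ks (r * x). m \<le> deg \<mu>"
    proof
      fix \<mu> assume "\<mu> \<in> ks (r * x)"
      then obtain l q where "\<mu> = l + q" "q \<in> ks x" using keys_mult[of r x] by blast
      then show "m \<le> deg \<mu>" using x unfolding T_def by (auto simp: deg_add)
    qed
    have "form m (r * x) \<in> Mset P Q"
      using x unfolding T_def by (auto simp: form_mult_low intro: Mset.Msmult)
    then show "r * x \<in> T" unfolding T_def using k by blast
  qed
  have sub: "h \<in> T" if "h \<in> ideal_mult A B" for h
  proof (rule ideal_mult_induct[OF that iT])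
    fix f g assume fg: "f \<in> A" "g \<in> B"
    have k: "\<forall>\<mu>\<in>ks (f * g). m \<le> deg \<mu>"
    proof
      fix \<mu> assume "\<mu> \<in> ks (f * g)"
      then obtain l q where "\<mu> = l + q" "l \<in> ks f" "q \<in> ks g" using keys_mult[of f g] by blast
      then show "m \<le> deg \<mu>" using la lb fg ab(1) by (fastforce simp: deg_add)
    qed
    have "form m (f * g) = form a f * form b g" using form_prod_full la lb fg ab(1) by metis
    moreover have "form a f * form b g \<in> Mset P Q"
      unfolding P_def Q_def using fg by (intro Mset.Mprod) auto
    ultimately show "f * g \<in> T" unfolding T_def using k by simp
  qed
  have "Poly_Mapping.single e1 1 \<in> T" using sub Xm_in eq by blast
  then have one: "1 \<in> Mset P Q" unfolding T_def by (simp add: form_e1)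
  have "Poly_Mapping.single e3 1 \<in> T" using sub e3_in eq by blast
  then have top: "monom 1 m \<in> Mset P Q" unfolding T_def by (simp add: form_e3)
  have jm': "0 < j" "j < m" "m \<noteq> j + j" using j1 jm m2 by auto
  show False by (rule lemmaU[OF jm' ab degP degQ W one top])
qed

lemma atom_main:
  assumes m2: "m \<noteq> 2 * j"
  shows "ideal_atom (ideal_gen (gens :: ('n, 'a::idom) mpoly_ring set))"
  unfolding ideal_atom_def
proof (intro conjI allI impI)
  show "nz_ideal (ideal_gen (gens :: ('n, 'a) mpoly_ring set))" by (rule Ig_nz)
  show "ideal_gen (gens :: ('n, 'a) mpoly_ring set) \<noteq> UNIV" using one_notin by blast
next
  fix A B :: "('n, 'a) mpoly_ring set"
  assume nzA: "nz_ideal A" and nzB: "nz_ideal B" and eq: "ideal_gen gens = ideal_mult A B"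
  have iA: "is_ideal A" and iB: "is_ideal B" using nzA nzB unfolding nz_ideal_def by auto
  obtain a f0 \<mu>0 where A0: "f0 \<in> A" "\<mu>0 \<in> ks f0" "deg \<mu>0 = a" "\<forall>\<nu>\<in>ks f0. psi \<mu>0 \<le> psi \<nu>"
    and la: "\<forall>f\<in>A. \<forall>\<mu>\<in>ks f. a \<le> deg \<mu>" using low_deg[OF nzA] by blast
  obtain b g0 \<nu>0 where B0: "g0 \<in> B" "\<nu>0 \<in> ks g0" "deg \<nu>0 = b" "\<forall>\<nu>\<in>ks g0. psi \<nu>0 \<le> psi \<nu>"
    and lb: "\<forall>g\<in>B. \<forall>\<mu>\<in>ks g. b \<le> deg \<mu>" using low_deg[OF nzB] by blast
  have "lk (f0 * g0) (\<mu>0 + \<nu>0) = lk f0 \<mu>0 * lk g0 \<nu>0"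
    by (rule lookup_mult_min[OF A0(2,4) B0(2,4)])
  also have "\<dots> \<noteq> 0" using A0(2) B0(2) by (simp add: in_keys_iff)
  finally have "\<mu>0 + \<nu>0 \<in> ks (f0 * g0)" by (simp add: in_keys_iff)
  moreover have "f0 * g0 \<in> ideal_gen gens" unfolding eq by (rule ideal_mult_prod[OF A0(1) B0(1)])
  ultimately have "Up (\<mu>0 + \<nu>0)" using Ig_keys by blast
  then have ge: "m \<le> a + b" using Up_deg A0(3) B0(3) by (metis deg_add)
  let ?T = "{h :: ('n, 'a) mpoly_ring. \<forall>\<mu>\<in>ks h. a + b \<le> deg \<mu>}"
  have iT: "is_ideal ?T" by (rule keys_ideal) (simp add: deg_add)
  have "h \<in> ?T" if "h \<in> ideal_mult A B" for h
  proof (rule ideal_mult_induct[OF that iT])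
    fix f g assume fg: "f \<in> A" "g \<in> B"
    show "f * g \<in> ?T"
    proof (intro CollectI ballI)
      fix \<mu> assume "\<mu> \<in> ks (f * g)"
      then obtain l q where "\<mu> = l + q" "l \<in> ks f" "q \<in> ks g" using keys_mult[of f g] by blast
      then show "a + b \<le> deg \<mu>" using la lb fg by (fastforce simp: deg_add)
    qed
  qed
  moreover have "Poly_Mapping.single e1 1 \<in> ideal_mult A B" using Xm_in eq by blast
  ultimately have "a + b \<le> deg e1"
    by (metis (no_types, lifting) lookup_single_eq mem_Collect_eq not_in_keys_iff_lookup_eq_zero one_neq_zero)
  then have ab: "a + b = m" using ge by simp
  show "A = UNIV \<or> B = UNIV"
  proof (cases "a = 0")
    case True
    then have "\<mu>0 = 0" using A0(3) deg_eq_0 by blast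
    then have "lk f0 0 \<noteq> 0" using A0(2) by (simp add: in_keys_iff)
    then have "1 \<in> A" using case_a0[OF iA iB eq A0(1)] by blast
    then show ?thesis using ideal_one_UNIV[OF iA] by blast
  next
    case a0: False
    show ?thesis
    proof (cases "b = 0")
      case True
      then have "\<nu>0 = 0" using B0(3) deg_eq_0 by blast
      then have "lk g0 0 \<noteq> 0" using B0(2) by (simp add: in_keys_iff)
      moreover have "ideal_gen gens = ideal_mult B A" using eq ideal_mult_comm by metis
      ultimately have "1 \<in> B" using case_a0[OF iB iA _ B0(1)] by blast
      then show ?thesis using ideal_one_UNIV[OF iB] by blast
    next
      case False
      have False using case_pos[OF m2 iA iB eq la lb ab] a0 False by simp
      then show ?thesis ..
    qed
  qed
qed

end

theorem corollary3p4:
  fixes X Y :: "'n::finite" and m j :: nat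
  assumes "CARD('n) \<ge> 2"
    and "X \<noteq> Y"
    and "ideal_monoid_BF TYPE(('n, 'a::idom) mpoly_ring)"
    and "m \<ge> 2" and "1 \<le> j" and "j \<le> m - 1"
  shows "ideal_atom (ideal_gen {(var X :: ('n, 'a) mpoly_ring) ^ m,
                                 var X ^ (m - j) * var Y ^ j,
                                 var Y ^ m})
         \<longleftrightarrow> m \<noteq> 2 * j"
proof -
  interpret ctx: xyctx X Y m j
    using assms by unfold_locales auto
  have g: "{(var X :: ('n, 'a) mpoly_ring) ^ m, var X ^ (m - j) * var Y ^ j, var Y ^ m} = ctx.gens"
    by (simp add: ctx.gens_def)
  show ?thesis
    unfolding g using ctx.square_case ctx.atom_main by blast
qed



end
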